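(* Let $a, d, \varepsilon \in \mathbb{R}$ and $k \in \mathbb{N}$, $k \geq 1$, with $0 < \varepsilon \leq d/2$, $a - \varepsilon > 0$ and $a + kd + \varepsilon < 1$. Let $p : \mathbb{R} \to \{0,1\}$ be the pulse function of the arithmetic progression $A = \{a, a+d, \dots, a+kd\}$ with parameter $\varepsilon$. Let $y_1, y_2 \in \mathbb{Z}$ with $y_2 - y_1 = k$, and let $P$ be a convex quadrilateral with vertices $(\ell_1, y_1)$, $(r_1, y_1)$, $(\ell_2, y_2)$, $(r_2, y_2)$. Suppose that (1) $\ell_1 < r_1$ and $\ell_2 < r_2$; (2) $\{\ell_1\} = a + \varepsilon$ and $\{\ell_2\} = a + kd + \varepsilon$; (3) $\{r_1\} = a - \varepsilon$ and $\{r_2\} = a + kd - \varepsilon$; (4) $k$ divides $\lfloor \ell_2 \rfloor - \lfloor \ell_1 \rfloor$ and $k$ divides $\lfloor r_2 \rfloor - \lfloor r_1 \rfloor$. Then there exists $M \in \mathbb{N}$ such that $$\Big| \big( t\,(-1,0)^T + P \big) \cap \mathbb{Z}^2 \Big| = M + p(\{t\}) \quad \text{for all } t \in [0,1].$$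
   Context: $\{x\} = x - \lfloor x \rfloor$ denotes the fractional part of $x \in \mathbb{R}$. For a finite set $A \subset \mathbb{R}$ and $\varepsilon > 0$, the pulse function of $A$ with parameter $\varepsilon$ is $p(x) = 0$ if $|x - y| < \varepsilon$ for some $y \in A$, and $p(x) = 1$ otherwise. The arithmetic progression defined by $(a,k,d)$ is $\{a, a+d, a+2d, \dots, a+kd\}$. $t\,(-1,0)^T + P = \{x + t(-1,0)^T : x \in P\}$. *)

theory Defs
  imports "HOL-Analysis.Analysis"
begin

definition pulse :: "real set \<Rightarrow> real \<Rightarrow> real \<Rightarrow> nat" where
  "pulse A eps x = (if \<exists>y\<in>A. \<bar>x - y\<bar> < eps then 0 else 1)"

definition arith_prog :: "real \<Rightarrow> nat \<Rightarrow> real \<Rightarrow> real set" where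
  "arith_prog a k d = {a + real i * d | i. i \<le> k}"

end

theory Submission
  imports Defs
begin


lemma hull_trap:
  fixes l1 r1 l2 r2 y1 y2 :: real
  assumes h: "y1 < y2" and lr: "l1 \<le> r1" "l2 \<le> r2"
  shows "convex hull {(l1,y1),(r1,y1),(l2,y2),(r2,y2)} = {p. y1 \<le> snd p \<and> snd p \<le> y2 \<and> l1 + (snd p - y1)/(y2-y1)*(l2-l1) \<le> fst p \<and> fst p \<le> r1 + (snd p - y1)/(y2-y1)*(r2-r1)}"
    (is "?H = ?S")
proof
  have eq: "?S = {p. inner (0,-1) p \<le> -y1} \<inter> {p. inner (0,1) p \<le> y2} \<inter>
     {p. inner (-1, (l2-l1)/(y2-y1)) p \<le> -l1 + y1*(l2-l1)/(y2-y1)} \<inter>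
     {p. inner (1, -(r2-r1)/(y2-y1)) p \<le> r1 - y1*(r2-r1)/(y2-y1)}"
    by (auto simp: inner_prod_def algebra_simps diff_divide_distrib add_divide_distrib)
  have "convex ?S" unfolding eq by (intro convex_Int convex_halfspace_le)
  moreover have "{(l1,y1),(r1,y1),(l2,y2),(r2,y2)} \<subseteq> ?S" using h lr by auto
  ultimately show "?H \<subseteq> ?S" by (simp add: hull_minimal)
next
  show "?S \<subseteq> ?H"
  proof
    fix p assume p: "p \<in> ?S"
    obtain x y where pxy: "p = (x,y)" by (cases p)
    define s where "s = (y - y1)/(y2-y1)"
    have s01: "0 \<le> s" "s \<le> 1" using p h by (auto simp: s_def pxy)
    have cH: "convex ?H" by simp
    have inc: "\<And>q. q \<in> {(l1,y1),(r1,y1),(l2,y2),(r2,y2)} \<Longrightarrow> q \<in> ?H" by (rule hull_inc)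
    have P: "(1-s) *\<^sub>R (l1,y1) + s *\<^sub>R (l2,y2) \<in> ?H"
      by (rule convexD[OF cH inc inc]) (use s01 in auto)
    have Q: "(1-s) *\<^sub>R (r1,y1) + s *\<^sub>R (r2,y2) \<in> ?H"
      by (rule convexD[OF cH inc inc]) (use s01 in auto)
    define Lx where "Lx = l1 + s*(l2-l1)"
    define Rx where "Rx = r1 + s*(r2-r1)"
    have "s*(y2-y1) = y - y1" using h unfolding s_def by simp
    then have ysy: "(1-s)*y1 + s*y2 = y" by (simp add: algebra_simps)
    have P': "(Lx, y) \<in> ?H" using P ysy by (simp add: Lx_def algebra_simps)
    have Q': "(Rx, y) \<in> ?H" using Q ysy by (simp add: Rx_def algebra_simps)
    have x: "Lx \<le> x" "x \<le> Rx" using p by (auto simp: pxy Lx_def Rx_def s_def)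
    show "p \<in> ?H"
    proof (cases "Lx = Rx")
      case True then show ?thesis using x P' pxy by auto
    next
      case False
      then have lt: "Lx < Rx" using x by auto
      define w where "w = (x - Lx)/(Rx - Lx)"
      have w01: "0 \<le> w" "w \<le> 1" using x lt by (auto simp: w_def)
      have mem: "(1-w) *\<^sub>R (Lx,y) + w *\<^sub>R (Rx,y) \<in> ?H"
        by (rule convexD[OF cH P' Q']) (use w01 in auto)
      have "w*(Rx-Lx) = x - Lx" using lt unfolding w_def by simp
      then have "(1-w)*Lx + w*Rx = x" by (simp add: algebra_simps)
      moreover have "(1-w) *\<^sub>R (Lx,y) + w *\<^sub>R (Rx,y) = ((1-w)*Lx + w*Rx, (1-w)*y + w*y)"
        by simp
      ultimately have "(1-w) *\<^sub>R (Lx,y) + w *\<^sub>R (Rx,y) = p"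
        by (simp add: pxy algebra_simps)
      with mem show ?thesis by simp
    qed
  qed
qed



lemma row_count:
  fixes l r t lam rho :: real and zl zr :: int
  assumes "l = of_int zl + lam" "r = of_int zr + rho" "0 < rho" "rho < lam" "lam < 1" "0 \<le> t" "t \<le> 1"
  shows "\<lfloor>r - t\<rfloor> - \<lceil>l - t\<rceil> + 1 = zr - zl - (if rho < t \<and> t < lam then 1 else 0)"
proof -
  have f: "\<lfloor>r - t\<rfloor> = \<lfloor>rho - t\<rfloor> + zr"
    using assms(2) floor_add_int[of "rho - t" zr] by (simp add: algebra_simps)
  have c: "\<lceil>l - t\<rceil> = \<lceil>lam - t\<rceil> + zl"
    using assms(1) ceiling_add_of_int[of "lam - t" zl] by (simp add: algebra_simps)
  have f2: "\<lfloor>rho - t\<rfloor> = (if t \<le> rho then 0 else -1)"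
    using assms by (intro floor_unique) auto
  have c2: "\<lceil>lam - t\<rceil> = (if t < lam then 1 else 0)"
    using assms by (intro ceiling_unique) auto
  show ?thesis using f c f2 c2 assms by auto
qed

lemma sum_ind:
  fixes a d eps t :: real and k :: nat
  assumes "0 < eps" "2*eps \<le> d"
  shows "(\<Sum>i\<in>{0..k}. (if \<bar>t - (a + real i * d)\<bar> < eps then 1 else 0::int))
       = (if \<exists>i\<le>k. \<bar>t - (a + real i * d)\<bar> < eps then 1 else 0)"
proof (cases "\<exists>i\<le>k. \<bar>t - (a + real i * d)\<bar> < eps")
  case False
  then show ?thesis by (auto intro!: sum.neutral)
next
  case True
  then obtain i0 where i0: "i0 \<le> k" "\<bar>t - (a + real i0 * d)\<bar> < eps" by auto
  have other: "\<not> \<bar>t - (a + real i * d)\<bar> < eps" if "i \<noteq> i0" for i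
  proof
    assume h: "\<bar>t - (a + real i * d)\<bar> < eps"
    have "\<bar>real i * d - real i0 * d\<bar> < 2*eps" using h i0(2) by linarith
    moreover have "\<bar>real i * d - real i0 * d\<bar> = \<bar>real i - real i0\<bar> * d"
      using assms by (simp add: abs_mult left_diff_distrib[symmetric])
    moreover have "\<bar>real i - real i0\<bar> \<ge> 1"
    proof (cases "i < i0")
      case True then have "real i + 1 \<le> real i0" by (metis Suc_leI of_nat_Suc of_nat_le_iff add.commute)
      then show ?thesis by linarith
    next
      case False then have "real i0 + 1 \<le> real i" using that
        by (metis Suc_leI le_neq_implies_less not_less of_nat_Suc of_nat_le_iff add.commute)
      then show ?thesis by linarith
    qed
    moreover have "\<bar>real i - real i0\<bar> * d \<ge> 1 * d"
      using calculation(3) assms by (intro mult_right_mono) auto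
    ultimately show False using assms by linarith
  qed
  have "(\<Sum>i\<in>{0..k}. (if \<bar>t - (a + real i * d)\<bar> < eps then 1 else 0::int))
     = (if \<bar>t - (a + real i0 * d)\<bar> < eps then 1 else 0) + (\<Sum>i\<in>{0..k}-{i0}. (if \<bar>t - (a + real i * d)\<bar> < eps then 1 else 0::int))"
    using i0 by (intro sum.remove) auto
  also have "(\<Sum>i\<in>{0..k}-{i0}. (if \<bar>t - (a + real i * d)\<bar> < eps then 1 else 0::int)) = 0"
    using other by (intro sum.neutral) auto
  finally show ?thesis using i0 True by simp
qed


lemma transl_mem:
  fixes H :: "(real \<times> real) set"
  shows "p \<in> (\<lambda>x. t *\<^sub>R (-1, 0) + x) ` H \<longleftrightarrow> (fst p + t, snd p) \<in> H"
proof
  assume "p \<in> (\<lambda>x. t *\<^sub>R (-1, 0) + x) ` H"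
  then obtain x where "x \<in> H" "p = t *\<^sub>R (-1, 0) + x" by auto
  then show "(fst p + t, snd p) \<in> H" by simp
next
  assume "(fst p + t, snd p) \<in> H"
  moreover have "p = t *\<^sub>R (-1, 0) + (fst p + t, snd p)" by (simp add: prod_eq_iff)
  ultimately show "p \<in> (\<lambda>x. t *\<^sub>R (-1, 0) + x) ` H" by blast
qed

theorem lemma1:
  fixes a d eps l1 r1 l2 r2 :: real and k :: nat and y1 y2 :: int
  assumes "k \<ge> 1"
    and "0 < eps" and "eps \<le> d / 2"
    and "a - eps > 0" and "a + real k * d + eps < 1"
    and "y2 - y1 = int k"
    and "l1 < r1" and "l2 < r2"
    and "frac l1 = a + eps" and "frac l2 = a + real k * d + eps"
    and "frac r1 = a - eps" and "frac r2 = a + real k * d - eps"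
    and "int k dvd \<lfloor>l2\<rfloor> - \<lfloor>l1\<rfloor>" and "int k dvd \<lfloor>r2\<rfloor> - \<lfloor>r1\<rfloor>"
  shows "\<exists>M::nat. \<forall>t\<in>{0..1::real}.
    card {z :: int \<times> int. (real_of_int (fst z), real_of_int (snd z)) \<in>
      (\<lambda>x. t *\<^sub>R (-1, 0) + x) ` (convex hull {(l1, real_of_int y1), (r1, real_of_int y1),
                                             (l2, real_of_int y2), (r2, real_of_int y2)})}
    = M + pulse (arith_prog a k d) eps (frac t)"
proof -
  define H where "H = convex hull {(l1, real_of_int y1), (r1, real_of_int y1),
                                   (l2, real_of_int y2), (r2, real_of_int y2)}"
  define Z where "Z t = {z :: int \<times> int. (real_of_int (fst z), real_of_int (snd z)) \<in>
      (\<lambda>x. t *\<^sub>R (-1, 0) + x) ` H}" for t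
  have kpos: "real k > 0" using assms(1) by simp
  have dpos: "d > 0" using assms(2,3) by simp
  have Ydiff: "real_of_int y2 - real_of_int y1 = real k" using assms(6)
    by (metis of_int_diff of_int_of_nat_eq)
  have memH: "(x, y) \<in> H \<longleftrightarrow> real_of_int y1 \<le> y \<and> y \<le> real_of_int y2 \<and>
      l1 + (y - real_of_int y1) / real k * (l2 - l1) \<le> x \<and> x \<le> r1 + (y - real_of_int y1) / real k * (r2 - r1)" for x y
  proof -
    have "real_of_int y1 < real_of_int y2" using Ydiff kpos by linarith
    then show ?thesis unfolding H_def using hull_trap[of "real_of_int y1" "real_of_int y2" l1 r1 l2 r2] assms(7,8) Ydiff
      by simp
  qed
  define Lr where "Lr i = l1 + real i / real k * (l2 - l1)" for i :: nat
  define Rr where "Rr i = r1 + real i / real k * (r2 - r1)" for i :: nat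
  define cnt where "cnt t i = \<lfloor>Rr i - t\<rfloor> - \<lceil>Lr i - t\<rceil> + 1" for t :: real and i :: nat
  have Zeq: "Z t = (\<lambda>(i,x). (x, y1 + int i)) ` (SIGMA i:{0..k}. {\<lceil>Lr i - t\<rceil>..\<lfloor>Rr i - t\<rfloor>})" for t
  proof (intro set_eqI iffI)
    fix z assume "z \<in> Z t"
    then have "(real_of_int (fst z) + t, real_of_int (snd z)) \<in> H" unfolding Z_def using transl_mem by auto
    then have h: "real_of_int y1 \<le> real_of_int (snd z)" "real_of_int (snd z) \<le> real_of_int y2"
      "l1 + (real_of_int (snd z) - real_of_int y1) / real k * (l2 - l1) \<le> real_of_int (fst z) + t"
      "real_of_int (fst z) + t \<le> r1 + (real_of_int (snd z) - real_of_int y1) / real k * (r2 - r1)"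
      using memH by auto
    define i where "i = nat (snd z - y1)"
    have i1: "snd z = y1 + int i" using h(1) unfolding i_def by simp
    have i2: "i \<le> k" using h(2) assms(6) unfolding i_def by simp
    have ri: "real_of_int (snd z) - real_of_int y1 = real i" using i1 by simp
    have "\<lceil>Lr i - t\<rceil> \<le> fst z" using h(3) ri unfolding Lr_def by (simp add: ceiling_le_iff)
    moreover have "fst z \<le> \<lfloor>Rr i - t\<rfloor>" using h(4) ri unfolding Rr_def by (simp add: le_floor_iff)
    ultimately show "z \<in> (\<lambda>(i,x). (x, y1 + int i)) ` (SIGMA i:{0..k}. {\<lceil>Lr i - t\<rceil>..\<lfloor>Rr i - t\<rfloor>})"
      using i1 i2 by (intro image_eqI[where x="(i, fst z)"]) (auto simp: prod_eq_iff)
  next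
    fix z assume "z \<in> (\<lambda>(i,x). (x, y1 + int i)) ` (SIGMA i:{0..k}. {\<lceil>Lr i - t\<rceil>..\<lfloor>Rr i - t\<rfloor>})"
    then obtain i x where z: "z = (x, y1 + int i)" "i \<le> k" "\<lceil>Lr i - t\<rceil> \<le> x" "x \<le> \<lfloor>Rr i - t\<rfloor>" by auto
    have "Lr i \<le> real_of_int x + t" using z(3) by (simp add: ceiling_le_iff)
    moreover have "real_of_int x + t \<le> Rr i" using z(4) by (simp add: le_floor_iff)
    moreover have "real_of_int y1 \<le> real_of_int (y1 + int i)" by simp
    moreover have "real_of_int (y1 + int i) \<le> real_of_int y2" using z(2) assms(6) by simp
    ultimately have "(real_of_int x + t, real_of_int (y1 + int i)) \<in> H"
      unfolding memH Lr_def Rr_def by simp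
    then show "z \<in> Z t" unfolding Z_def using transl_mem z(1) by auto
  qed
  have cardZ: "card (Z t) = (\<Sum>i\<in>{0..k}. nat (cnt t i))" for t
  proof -
    have "inj_on (\<lambda>(i,x). (x, y1 + int i)) (SIGMA i:{0..k}. {\<lceil>Lr i - t\<rceil>..\<lfloor>Rr i - t\<rfloor>})"
      by (auto simp: inj_on_def)
    then have "card (Z t) = card (SIGMA i:{0..k}. {\<lceil>Lr i - t\<rceil>..\<lfloor>Rr i - t\<rfloor>})"
      unfolding Zeq by (rule card_image)
    also have "\<dots> = (\<Sum>i\<in>{0..k}. card {\<lceil>Lr i - t\<rceil>..\<lfloor>Rr i - t\<rfloor>})"
      by (rule card_SigmaI) auto
    finally show ?thesis by (simp add: cnt_def)
  qed
  have fl: "l1 = of_int \<lfloor>l1\<rfloor> + (a + eps)" "l2 = of_int \<lfloor>l2\<rfloor> + (a + real k * d + eps)"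
    "r1 = of_int \<lfloor>r1\<rfloor> + (a - eps)" "r2 = of_int \<lfloor>r2\<rfloor> + (a + real k * d - eps)"
    using assms(9-12) unfolding frac_def by linarith+
  obtain m where m: "\<lfloor>l2\<rfloor> - \<lfloor>l1\<rfloor> = int k * m" using assms(13) by (auto elim: dvdE)
  obtain m' where m': "\<lfloor>r2\<rfloor> - \<lfloor>r1\<rfloor> = int k * m'" using assms(14) by (auto elim: dvdE)
  have dl: "l2 - l1 = real k * (of_int m + d)"
  proof -
    have "of_int (\<lfloor>l2\<rfloor> - \<lfloor>l1\<rfloor>) = real k * of_int m" using m by (metis of_int_mult of_int_of_nat_eq)
    then show ?thesis using fl(1,2) by (simp add: algebra_simps)
  qed
  have dr: "r2 - r1 = real k * (of_int m' + d)"
  proof -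
    have "of_int (\<lfloor>r2\<rfloor> - \<lfloor>r1\<rfloor>) = real k * of_int m'" using m' by (metis of_int_mult of_int_of_nat_eq)
    then show ?thesis using fl(3,4) by (simp add: algebra_simps)
  qed
  have Lri: "Lr i = of_int (\<lfloor>l1\<rfloor> + int i * m) + (a + eps + real i * d)" for i
  proof -
    have "Lr i = l1 + real i * (of_int m + d)" unfolding Lr_def dl using kpos by simp
    then show ?thesis using fl(1) by (simp add: algebra_simps)
  qed
  have Rri: "Rr i = of_int (\<lfloor>r1\<rfloor> + int i * m') + (a - eps + real i * d)" for i
  proof -
    have "Rr i = r1 + real i * (of_int m' + d)" unfolding Rr_def dr using kpos by simp
    then show ?thesis using fl(3) by (simp add: algebra_simps)
  qed
  define C where "C i = (\<lfloor>r1\<rfloor> + int i * m') - (\<lfloor>l1\<rfloor> + int i * m)" for i :: nat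
  define ind where "ind t i = (if \<bar>t - (a + real i * d)\<bar> < eps then 1 else 0::int)" for t :: real and i :: nat
  have cnt_eq: "cnt t i = C i - ind t i" if t: "0 \<le> t" "t \<le> 1" and i: "i \<le> k" for t i
  proof -
    have id0: "real i * d \<ge> 0" using dpos by simp
    have idk: "real i * d \<le> real k * d" using i dpos by (intro mult_right_mono) auto
    have "cnt t i = C i - (if a - eps + real i * d < t \<and> t < a + eps + real i * d then 1 else 0)"
      unfolding cnt_def C_def
      by (rule row_count[OF Lri Rri]) (use id0 idk assms(2,4,5) t in auto)
    moreover have "(a - eps + real i * d < t \<and> t < a + eps + real i * d) \<longleftrightarrow> \<bar>t - (a + real i * d)\<bar> < eps"
      by (auto simp: abs_less_iff)
    ultimately show ?thesis unfolding ind_def by simp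
  qed
  have cnt_nn: "cnt t i \<ge> 0" if i: "i \<le> k" for t i
  proof -
    define s where "s = real i / real k"
    have s01: "0 \<le> s" "s \<le> 1" using i kpos by (auto simp: s_def)
    have "Rr i - Lr i = (1 - s) * (r1 - l1) + s * (r2 - l2)" unfolding Lr_def Rr_def s_def[symmetric]
      by (simp add: algebra_simps)
    also have "\<dots> \<ge> 0" using s01 assms(7,8) by (intro add_nonneg_nonneg mult_nonneg_nonneg) auto
    finally have LR: "Lr i - t \<le> Rr i - t" by simp
    have h1: "real_of_int \<lceil>Lr i - t\<rceil> < Lr i - t + 1" by linarith
    have h2: "Rr i - t < real_of_int \<lfloor>Rr i - t\<rfloor> + 1" by linarith
    have h3: "real_of_int (\<lfloor>Rr i - t\<rfloor> + 2) = real_of_int \<lfloor>Rr i - t\<rfloor> + 2" by simp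
    have "real_of_int \<lceil>Lr i - t\<rceil> < real_of_int (\<lfloor>Rr i - t\<rfloor> + 2)" using h1 h2 h3 LR by linarith
    then have "\<lceil>Lr i - t\<rceil> < \<lfloor>Rr i - t\<rfloor> + 2" by (simp only: of_int_less_iff)
    then show ?thesis unfolding cnt_def by simp
  qed
  define P where "P x = (\<exists>i\<le>k. \<bar>x - (a + real i * d)\<bar> < eps)" for x
  have Pfrac: "P (frac t) = P t" if t: "0 \<le> t" "t \<le> 1" for t
  proof (cases "t = 1")
    case True
    have np1: "\<not> P 1"
    proof
      assume "P 1"
      then obtain i where i: "i \<le> k" "\<bar>1 - (a + real i * d)\<bar> < eps" unfolding P_def by auto
      have "real i * d \<le> real k * d" using i dpos by (intro mult_right_mono) auto
      then show False using i assms(5) by (auto simp: abs_less_iff)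
    qed
    have np0: "\<not> P 0"
    proof
      assume "P 0"
      then obtain i where i: "i \<le> k" "\<bar>0 - (a + real i * d)\<bar> < eps" unfolding P_def by auto
      have "real i * d \<ge> 0" using dpos by simp
      then show False using i assms(4) by (auto simp: abs_less_iff)
    qed
    show ?thesis using True np0 np1 by simp
  next
    case False
    then have "frac t = t" using t by (simp add: frac_eq)
    then show ?thesis by simp
  qed
  have pulse_eq: "pulse (arith_prog a k d) eps (frac t) = (if P t then 0 else 1)" if t: "0 \<le> t" "t \<le> 1" for t
  proof -
    have "(\<exists>y\<in>arith_prog a k d. \<bar>frac t - y\<bar> < eps) = P (frac t)"
      unfolding arith_prog_def P_def by auto
    then show ?thesis unfolding pulse_def using Pfrac[OF t] by simp
  qed
  define T where "T = (\<Sum>i\<in>{0..k}. C i)"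
  have main: "int (card (Z t)) = T - 1 + int (pulse (arith_prog a k d) eps (frac t))"
    if t: "0 \<le> t" "t \<le> 1" for t
  proof -
    have "int (card (Z t)) = (\<Sum>i\<in>{0..k}. int (nat (cnt t i)))" unfolding cardZ by simp
    also have "\<dots> = (\<Sum>i\<in>{0..k}. C i - ind t i)"
    proof (intro sum.cong refl)
      fix i assume "i \<in> {0..k}"
      then have "i \<le> k" by simp
      then show "int (nat (cnt t i)) = C i - ind t i" using cnt_nn[of i t] cnt_eq[OF t] by simp
    qed
    also have "\<dots> = T - (\<Sum>i\<in>{0..k}. ind t i)" unfolding T_def by (simp add: sum_subtractf)
    also have "(\<Sum>i\<in>{0..k}. ind t i) = (if P t then 1 else 0)"
      unfolding ind_def P_def using sum_ind[of eps d t a k] assms(2,3) by simp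
    finally show ?thesis using pulse_eq[OF t] by simp
  qed
  have Tpos: "T \<ge> 1"
  proof -
    have a01: "0 \<le> a" "a \<le> 1" using assms(2,4,5) dpos kpos
      by (auto intro: order.trans[OF _ less_imp_le[OF assms(5)]] simp: mult_nonneg_nonneg)
    have "P a" unfolding P_def using assms(2) by (intro exI[of _ 0]) auto
    then have "int (card (Z a)) = T - 1" using main[OF a01] pulse_eq[OF a01] by simp
    then show ?thesis by linarith
  qed
  show ?thesis
  proof (intro exI[of _ "nat (T - 1)"] ballI)
    fix t :: real assume "t \<in> {0..1}"
    then have t: "0 \<le> t" "t \<le> 1" by auto
    have "int (card (Z t)) = int (nat (T - 1) + pulse (arith_prog a k d) eps (frac t))"
      using main[OF t] Tpos by simp
    then have "card (Z t) = nat (T - 1) + pulse (arith_prog a k d) eps (frac t)" by (simp only: of_nat_eq_iff)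
    then show "card {z :: int \<times> int. (real_of_int (fst z), real_of_int (snd z)) \<in>
      (\<lambda>x. t *\<^sub>R (-1, 0) + x) ` (convex hull {(l1, real_of_int y1), (r1, real_of_int y1),
                                             (l2, real_of_int y2), (r2, real_of_int y2)})}
    = nat (T - 1) + pulse (arith_prog a k d) eps (frac t)" unfolding Z_def H_def by simp
  qed
qed

end
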